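(* Consider the delay differential system \[ \begin{aligned} \dot T(t)&= s-dT(t)+aT(t)\Big(1-\frac{T(t)+I(t)}{T_{\max}}\Big)-\frac{bT(t)V(t)}{1+\alpha V(t)},\\ \dot I(t)&= \frac{bT(t-\tau)V(t-\tau)}{1+\alpha V(t-\tau)}+aI(t)\Big(1-\frac{T(t)+I(t)}{T_{\max}}\Big)-\mu I(t),\\ \dot V(t)&= pI(t)-cV(t), \end{aligned} \] with positive constants $s,d,a,T_{\max},b,\alpha,\mu,p,c$ satisfying $d\le\mu$, and $\tau\ge0$. Then there exist $M_I,M_V>0$ such that every positive solution $(T(t),I(t),V(t))$ satisfies $I(t)<M_I$ and $V(t)<M_V$ for all sufficiently large $t$.
   Context: A positive solution is one with $T,I,V>0$. *)

theory Defs
  imports "HOL-Analysis.Analysis"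
begin

definition positive_solution ::
  "real \<Rightarrow> real \<Rightarrow> real \<Rightarrow> real \<Rightarrow> real \<Rightarrow> real \<Rightarrow> real \<Rightarrow> real \<Rightarrow> real \<Rightarrow> real \<Rightarrow>
   (real \<Rightarrow> real) \<Rightarrow> (real \<Rightarrow> real) \<Rightarrow> (real \<Rightarrow> real) \<Rightarrow> bool" where
  "positive_solution s d a Tmax b \<alpha> \<mu> p c \<tau> T I V \<longleftrightarrow>
     continuous_on {-\<tau>..} T \<and> continuous_on {-\<tau>..} I \<and> continuous_on {-\<tau>..} V \<and>
     (\<forall>t\<ge>-\<tau>. T t > 0 \<and> I t > 0 \<and> V t > 0) \<and>
     (\<forall>t>0.
        (T has_real_derivative
           (s - d * T t + a * T t * (1 - (T t + I t) / Tmax) - b * T t * V t / (1 + \<alpha> * V t))) (at t) \<and>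
        (I has_real_derivative
           (b * T (t - \<tau>) * V (t - \<tau>) / (1 + \<alpha> * V (t - \<tau>))
            + a * I t * (1 - (T t + I t) / Tmax) - \<mu> * I t)) (at t) \<and>
        (V has_real_derivative (p * I t - c * V t)) (at t))"

end

theory Submission
  imports Defs "HOL-Real_Asymp.Real_Asymp"
begin

lemma logistic_bound:
  fixes a Tm x y :: real
  assumes "a > 0" "Tm > 0" "x > 0" "y \<ge> 0"
  shows "a * x * (1 - (x + y) / Tm) \<le> a * Tm / 4"
proof -
  have "x * (1 - (x + y) / Tm) \<le> x * (1 - x / Tm)"
    using assms by (intro mult_left_mono) (auto simp: divide_right_mono)
  also have "\<dots> = (Tm * x - x^2) / Tm" using assms by (simp add: field_simps power2_eq_square)
  also have "\<dots> \<le> Tm / 4"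
  proof -
    have "Tm * x - x^2 \<le> Tm * Tm / 4"
      using sum_squares_ge_zero[of "x - Tm/2" 0]
      by (simp add: power2_eq_square algebra_simps)
    then show ?thesis using assms by (simp add: divide_simps)
  qed
  finally show ?thesis using assms
    by (metis mult.assoc mult_left_mono less_imp_le times_divide_eq_right)
qed

lemma eventual_bound:
  fixes f f' :: "real \<Rightarrow> real" and K d t1 :: real
  assumes d: "d > 0"
    and H: "\<And>t. t > t1 \<Longrightarrow> (f has_real_derivative f' t) (at t) \<and> f' t \<le> K - d * f t"
  shows "\<forall>\<^sub>F t in at_top. f t < K / d + 1"
proof -
  define t0 where "t0 = t1 + 1"
  define g where "g t = exp (d * t) * (f t - K / d)" for t
  have mono: "g t \<le> g t0" if "t \<ge> t0" for t
  proof (rule DERIV_nonpos_imp_nonincreasing[OF that])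
    fix x assume x1: "t0 \<le> x" and x2: "x \<le> t"
    note x = x1 x2
    then have "x > t1" unfolding t0_def by linarith
    from H[OF this] have D: "(f has_real_derivative f' x) (at x)" and B: "f' x \<le> K - d * f x" by auto
    have "(g has_real_derivative (exp (d*x) * d * (f x - K/d) + exp (d*x) * f' x)) (at x)"
      unfolding g_def
      by (auto intro!: derivative_eq_intros D)
    moreover have "exp (d*x) * d * (f x - K/d) + exp (d*x) * f' x \<le> 0"
    proof -
      have "exp (d*x) * d * (f x - K/d) + exp (d*x) * f' x = exp (d*x) * (d * f x - K + f' x)"
        using d by (simp add: field_simps)
      also have "\<dots> \<le> 0" using B by (intro mult_nonneg_nonpos) auto
      finally show ?thesis .
    qed
    ultimately show "\<exists>y. (g has_real_derivative y) (at x) \<and> y \<le> 0" by blast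
  qed
  define C where "C = g t0"
  have L: "((\<lambda>t. exp (-(d*t)) * C) \<longlongrightarrow> 0) at_top" using d by real_asymp
  have ev: "\<forall>\<^sub>F t in at_top. exp (-(d*t)) * C < 1"
    using order_tendstoD(2)[OF L, of 1] by simp
  moreover have "\<forall>\<^sub>F t in at_top. t \<ge> t0" by (rule eventually_ge_at_top)
  ultimately show ?thesis
  proof eventually_elim
    case (elim t)
    have "exp (d*t) * (f t - K/d) \<le> C" using mono[OF elim(2)] unfolding g_def C_def .
    then have "f t - K/d \<le> exp (-(d*t)) * C"
      by (simp add: exp_minus field_simps mult.commute)
    with elim(1) show ?case by simp
  qed
qed

theorem theorem6:
  fixes s d a Tmax b \<alpha> \<mu> p c \<tau> :: real
  assumes "s > 0" "d > 0" "a > 0" "Tmax > 0" "b > 0" "\<alpha> > 0" "\<mu> > 0" "p > 0" "c > 0"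
    and "d \<le> \<mu>" and "\<tau> \<ge> 0"
  shows "\<exists>MI MV. MI > 0 \<and> MV > 0 \<and>
           (\<forall>T I V. positive_solution s d a Tmax b \<alpha> \<mu> p c \<tau> T I V \<longrightarrow>
              (\<forall>\<^sub>F t in at_top. I t < MI \<and> V t < MV))"
proof -
  define K where "K = s + a * Tmax / 2"
  define MI where "MI = K / d + 1"
  define MV where "MV = p * MI / c + 1"
  have K0: "K > 0" unfolding K_def using assms by (simp add: add_pos_pos)
  have MI0: "MI > 0" unfolding MI_def using K0 assms by (simp add: add_pos_pos)
  have MV0: "MV > 0" unfolding MV_def using MI0 assms by (simp add: add_pos_pos)
  have main: "\<forall>\<^sub>F t in at_top. I t < MI \<and> V t < MV"
    if PS: "positive_solution s d a Tmax b \<alpha> \<mu> p c \<tau> T I V" for T I V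
  proof -
    have pos: "\<And>t. t \<ge> -\<tau> \<Longrightarrow> T t > 0 \<and> I t > 0 \<and> V t > 0"
      using PS unfolding positive_solution_def by blast
    have der: "\<And>t. t > 0 \<Longrightarrow>
        (T has_real_derivative
           (s - d * T t + a * T t * (1 - (T t + I t) / Tmax) - b * T t * V t / (1 + \<alpha> * V t))) (at t) \<and>
        (I has_real_derivative
           (b * T (t - \<tau>) * V (t - \<tau>) / (1 + \<alpha> * V (t - \<tau>))
            + a * I t * (1 - (T t + I t) / Tmax) - \<mu> * I t)) (at t) \<and>
        (V has_real_derivative (p * I t - c * V t)) (at t)"
      using PS unfolding positive_solution_def by blast
    define W where "W t = T (t - \<tau>) + I t" for t
    define W' where "W' t = (s - d * T (t-\<tau>) + a * T (t-\<tau>) * (1 - (T (t-\<tau>) + I (t-\<tau>)) / Tmax)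
        - b * T (t-\<tau>) * V (t-\<tau>) / (1 + \<alpha> * V (t-\<tau>)))
        + (b * T (t - \<tau>) * V (t - \<tau>) / (1 + \<alpha> * V (t - \<tau>))
            + a * I t * (1 - (T t + I t) / Tmax) - \<mu> * I t)" for t
    have WH: "(W has_real_derivative W' t) (at t) \<and> W' t \<le> K - d * W t" if t: "t > \<tau>" for t
    proof
      have t0: "t - \<tau> > 0" "t > 0" using t assms by auto
      define DTv where "DTv = s - d * T (t-\<tau>) + a * T (t-\<tau>) * (1 - (T (t-\<tau>) + I (t-\<tau>)) / Tmax)
        - b * T (t-\<tau>) * V (t-\<tau>) / (1 + \<alpha> * V (t-\<tau>))"
      have DT: "(T has_real_derivative DTv) (at (t + - \<tau>))"
        using conjunct1[OF der[OF t0(1)]] unfolding DTv_def by simp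
      have DT': "((\<lambda>x. T (x + - \<tau>)) has_real_derivative DTv) (at t)"
        using DT DERIV_shift by blast
      note DI = conjunct1[OF conjunct2[OF der[OF t0(2)]]]
      show "(W has_real_derivative W' t) (at t)"
        unfolding W_def W'_def using DERIV_add[OF DT' DI] by (simp add: DTv_def)
      have p1: "T (t-\<tau>) > 0" "I (t-\<tau>) > 0" using pos[of "t-\<tau>"] assms t by auto
      have p2: "T t > 0" "I t > 0" using pos[of t] assms t by auto
      have b1: "a * T (t-\<tau>) * (1 - (T (t-\<tau>) + I (t-\<tau>)) / Tmax) \<le> a * Tmax / 4"
        using logistic_bound[of a Tmax "T (t-\<tau>)" "I (t-\<tau>)"] p1 assms by simp
      have b2: "a * I t * (1 - (T t + I t) / Tmax) \<le> a * Tmax / 4"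
        using logistic_bound[of a Tmax "I t" "T t"] p2 assms by (simp add: add.commute)
      have b3: "\<mu> * I t \<ge> d * I t" using p2 assms by (intro mult_right_mono) auto
      show "W' t \<le> K - d * W t"
        unfolding W'_def W_def K_def using b1 b2 b3 distrib_left[of d "T (t-\<tau>)" "I t"] by linarith
    qed
    have evW: "\<forall>\<^sub>F t in at_top. W t < MI"
      unfolding MI_def by (rule eventual_bound[OF assms(2) WH]) auto
    have evI: "\<forall>\<^sub>F t in at_top. I t < MI"
      using evW eventually_ge_at_top[of 0]
    proof eventually_elim
      case (elim t)
      have "T (t - \<tau>) > 0" using pos[of "t-\<tau>"] elim assms by auto
      then show ?case using elim unfolding W_def by simp
    qed
    obtain t2 where t2: "\<And>t. t \<ge> t2 \<Longrightarrow> I t < MI"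
      using evI unfolding eventually_at_top_linorder by blast
    define tt where "tt = max t2 0"
    have VH: "(V has_real_derivative (p * I t - c * V t)) (at t) \<and> p * I t - c * V t \<le> p * MI - c * V t"
      if t: "t > max t2 0" for t
    proof
      show "(V has_real_derivative (p * I t - c * V t)) (at t)" using der[of t] t by auto
      have "I t < MI" using t2[of t] t by auto
      then show "p * I t - c * V t \<le> p * MI - c * V t" using assms by simp
    qed
    have VH': "(V has_real_derivative (p * I t - c * V t)) (at t) \<and> p * I t - c * V t \<le> p * MI - c * V t"
      if "t > tt" for t using VH that unfolding tt_def by blast
    have evV: "\<forall>\<^sub>F t in at_top. V t < MV"
      unfolding MV_def by (rule eventual_bound[OF assms(9) VH']) auto
    show ?thesis using evI evV by eventually_elim simp
  qed
  show ?thesis using MI0 MV0 main by blast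
qed

end
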